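(* Let $G$ be a Polish group and let $H$ be an uncountable closed subgroup of $G$ contained in the center of $G$. Suppose $H$ is the union of a set which is Haar null in $H$ and a set which is Haar meager in $H$. Then $G$ is the union of a set which is Haar null in $G$ and a set which is Haar meager in $G$. In particular, this holds for $G=\mathbb{R}^\omega$ and for $G=X$ where $X$ is any Banach space.
   Context: Let $G$ be a Polish group. A set $A\subseteq G$ is Haar null if there exist a Borel set $B\supseteq A$ and a Borel probability measure $\mu$ on $G$ such that $\mu(gBh)=0$ for all $g,h\in G$. A set $A\subseteq G$ is Haar meager if there exist a Borel set $B\supseteq A$, a compact metric space $K$, and a continuous map $f\colon K\to G$ such that $f^{-1}(gBh)$ is meager in $K$ for every $g,h\in G$. (For abelian groups, these reduce to the conditions $\mu(x+B)=0$, resp. $f^{-1}(x+B)$ meager, for all $x\in G$.) *)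

theory Defs
  imports "HOL-Analysis.Analysis" "HOL-Probability.Probability" "HOL-Algebra.Group" "HOL-Library.Function_Algebras"
begin

definition borel_sets :: "'a topology \<Rightarrow> 'a set set" where
  "borel_sets T = sigma_sets (topspace T) {U. openin T U}"

definition nowhere_dense_in :: "'a topology \<Rightarrow> 'a set \<Rightarrow> bool" where
  "nowhere_dense_in X S \<longleftrightarrow> S \<subseteq> topspace X \<and> X interior_of (X closure_of S) = {}"

definition meager_in :: "'a topology \<Rightarrow> 'a set \<Rightarrow> bool" where
  "meager_in X S \<longleftrightarrow> (\<exists>F. countable F \<and> (\<forall>N\<in>F. nowhere_dense_in X N) \<and> S \<subseteq> \<Union>F)"

definition polish_group :: "('a, 'b) monoid_scheme \<Rightarrow> 'a topology \<Rightarrow> bool" where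
  "polish_group G T \<longleftrightarrow> group G \<and> topspace T = carrier G
     \<and> completely_metrizable_space T \<and> separable_space T
     \<and> continuous_map (prod_topology T T) T (\<lambda>(x, y). x \<otimes>\<^bsub>G\<^esub> y)
     \<and> continuous_map T T (\<lambda>x. inv\<^bsub>G\<^esub> x)"

definition translate2 :: "('a, 'b) monoid_scheme \<Rightarrow> 'a \<Rightarrow> 'a set \<Rightarrow> 'a \<Rightarrow> 'a set" where
  "translate2 G g B h = (\<lambda>x. g \<otimes>\<^bsub>G\<^esub> x \<otimes>\<^bsub>G\<^esub> h) ` B"

definition haar_null :: "('a, 'b) monoid_scheme \<Rightarrow> 'a topology \<Rightarrow> 'a set \<Rightarrow> bool" where
  "haar_null G T A \<longleftrightarrow> (\<exists>B (\<mu>::'a measure). B \<in> borel_sets T \<and> A \<subseteq> B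
     \<and> sets \<mu> = borel_sets T \<and> prob_space \<mu>
     \<and> (\<forall>g\<in>carrier G. \<forall>h\<in>carrier G. emeasure \<mu> (translate2 G g B h) = 0))"

(* Compact metric spaces K are represented on a carrier K :: real set with an
   arbitrary metric d; every compact metric space has cardinality at most the
   continuum, hence is isometric to such a space. *)
definition haar_meager :: "('a, 'b) monoid_scheme \<Rightarrow> 'a topology \<Rightarrow> 'a set \<Rightarrow> bool" where
  "haar_meager G T A \<longleftrightarrow> (\<exists>B (K::real set) d f. B \<in> borel_sets T \<and> A \<subseteq> B
     \<and> Metric_space K d \<and> K \<noteq> {} \<and> compact_space (Metric_space.mtopology K d)
     \<and> continuous_map (Metric_space.mtopology K d) T f
     \<and> (\<forall>g\<in>carrier G. \<forall>h\<in>carrier G.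
          meager_in (Metric_space.mtopology K d) {x \<in> K. f x \<in> translate2 G g B h}))"

definition group_center :: "('a, 'b) monoid_scheme \<Rightarrow> 'a set" where
  "group_center G = {z \<in> carrier G. \<forall>x\<in>carrier G. z \<otimes>\<^bsub>G\<^esub> x = x \<otimes>\<^bsub>G\<^esub> z}"

definition add_group :: "('a::group_add) monoid" where
  "add_group = \<lparr>carrier = UNIV, mult = (+), one = 0\<rparr>"

end

theory Submission
  imports Defs
begin


lemma geo_sum_4: "(\<lambda>k. 2 * (1/2::real)^(n+k)) sums (4 * (1/2)^n)"
proof -
  have "(\<lambda>k. (1/2::real)^k) sums (1 / (1 - 1/2))" by (rule geometric_sums) simp
  then have "(\<lambda>k. (2 * (1/2)^n) * (1/2::real)^k) sums ((2 * (1/2)^n) * (1 / (1 - 1/2)))"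
    by (rule sums_mult)
  then show ?thesis by (simp add: power_add mult_ac)
qed

lemma null_limsup_balls:
  fixes a :: "nat \<Rightarrow> real"
  shows "emeasure lborel (\<Inter>n. \<Union>k. ball (a k) ((1/2)^(n+k))) = 0"
proof -
  let ?X = "\<Inter>n. \<Union>k. ball (a k) ((1/2::real)^(n+k))"
  have bnd: "emeasure lborel ?X \<le> ennreal (4 * (1/2)^n)" for n
  proof -
    have "emeasure lborel ?X \<le> emeasure lborel (\<Union>k. ball (a k) ((1/2::real)^(n+k)))"
      by (rule emeasure_mono) auto
    also have "\<dots> \<le> (\<Sum>k. emeasure lborel (ball (a k) ((1/2::real)^(n+k))))"
      by (rule emeasure_subadditive_countably) auto
    also have "\<dots> = (\<Sum>k. ennreal (2 * (1/2)^(n+k)))"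
    proof (rule suminf_cong)
      fix k
      have "ball (a k) ((1/2::real)^(n+k)) = {a k - (1/2)^(n+k) <..< a k + (1/2)^(n+k)}"
        by (auto simp: ball_def dist_real_def)
      then show "emeasure lborel (ball (a k) ((1/2::real)^(n+k))) = ennreal (2 * (1/2)^(n+k))"
        by simp
    qed
    also have "\<dots> = ennreal (\<Sum>k. 2 * (1/2)^(n+k))"
      using geo_sum_4[of n] by (intro suminf_ennreal2) (auto simp: sums_iff)
    also have "\<dots> = ennreal (4 * (1/2)^n)"
      using geo_sum_4[of n] by (simp add: sums_iff)
    finally show ?thesis .
  qed
  have lim: "(\<lambda>n. ennreal (4 * (1/2::real)^n)) \<longlonglongrightarrow> ennreal 0"
    by (intro tendsto_ennrealI tendsto_mult_right_zero LIMSEQ_power_zero) simp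
  have "emeasure lborel ?X \<le> 0"
    using lim bnd by (metis (no_types, lifting) LIMSEQ_le_const ennreal_0)
  then show ?thesis by simp
qed

definition qe :: "nat \<Rightarrow> real" where "qe = from_nat_into \<rat>"

lemma range_qe: "range qe = \<rat>"
  unfolding qe_def by (rule range_from_nat_into) (auto simp: countable_rat)

definition UU :: "nat \<Rightarrow> real set" where "UU n = (\<Union>k. ball (qe k) ((1/2)^(n+k)))"
definition AA :: "real set" where "AA = (\<Inter>n. UU n)"

lemma open_UU: "open (UU n)" unfolding UU_def by auto

lemma AA_borel: "AA \<in> sets borel"
  unfolding AA_def using open_UU by (intro sets.countable_INT) auto

lemma AA_shift: "{t. c + t \<in> AA} = (\<Inter>n. \<Union>k. ball (qe k - c) ((1/2)^(n+k)))"
  unfolding AA_def UU_def by (auto simp: dist_real_def algebra_simps)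

lemma AA_shift_null: "emeasure lborel {t. c + t \<in> AA} = 0"
  unfolding AA_shift by (rule null_limsup_balls)

lemma AA_shift_borel: "{t. c + t \<in> AA} \<in> sets borel"
  unfolding AA_shift by (intro sets.countable_INT sets.countable_UN) auto

lemma open_has_rat: assumes "open (S::real set)" "x \<in> S" shows "\<exists>q\<in>\<rat>. q \<in> S"
proof -
  obtain e where e: "e > 0" "ball x e \<subseteq> S" using assms open_contains_ball by blast
  obtain q where q: "q \<in> \<rat>" "x - e < q" "q < x" using Rats_dense_in_real[of "x - e" x] e by auto
  then have "q \<in> ball x e" by (auto simp: dist_real_def)
  then show ?thesis using q e by blast
qed

lemma UU_meets_open: assumes "open (S::real set)" "S \<noteq> {}" shows "S \<inter> UU n \<noteq> {}"
proof -
  obtain x where "x \<in> S" using assms by auto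
  then obtain q where q: "q \<in> \<rat>" "q \<in> S" using open_has_rat assms by blast
  then obtain k where "q = qe k" using range_qe by (metis imageE)
  then have "q \<in> UU n" unfolding UU_def by (auto intro!: exI[of _ k])
  then show ?thesis using q by auto
qed

lemma mtop01: "Metric_space.mtopology {0..1::real} dist = top_of_set {0..1}"
proof -
  interpret Submetric UNIV dist "{0..1::real}" by unfold_locales auto
  show ?thesis using mtopology_submetric by (simp add: mtopology_is_euclidean)
qed

lemma open01_inner:
  assumes "open V" "t0 \<in> V" "t0 \<in> {0..1::real}"
  shows "V \<inter> {0<..<1} \<noteq> {}"
proof -
  obtain r where r: "r > 0" "ball t0 r \<subseteq> V" using assms open_contains_ball by blast
  define s where "s = min (r/2) (1/4)"
  have s: "s > 0" "s < r" "s \<le> 1/4" using r by (auto simp: s_def)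
  define t1 where "t1 = (if t0 \<le> 1/2 then t0 + s else t0 - s)"
  have "t1 \<in> ball t0 r" using s by (auto simp: t1_def dist_real_def)
  moreover have "t1 \<in> {0<..<1}" using s assms(3) by (auto simp: t1_def)
  ultimately show ?thesis using r by blast
qed

lemma meager_shift:
  "meager_in (top_of_set {0..1::real}) {t \<in> {0..1}. c + t \<notin> AA}"
proof -
  define F where "F n = {t \<in> {0..1::real}. c + t \<notin> UU n}" for n
  have clo: "closedin (top_of_set {0..1}) (F n)" for n
  proof -
    have "closed ((\<lambda>t. c + t) -` (- UU n))"
      using open_UU[of n] by (intro continuous_closed_vimage) (auto simp: closed_Compl)
    then have "closed {t. c + t \<in> - UU n}" by (simp add: vimage_def)
    moreover have "F n = {0..1::real} \<inter> {t. c + t \<in> - UU n}" by (auto simp: F_def)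
    ultimately show ?thesis by (simp add: closedin_closed_Int)
  qed
  have nd: "nowhere_dense_in (top_of_set {0..1}) (F n)" for n
  proof -
    have int: "top_of_set {0..1} interior_of F n = {}"
      unfolding interior_of_eq_empty_alt
    proof (intro allI impI)
      fix T assume T: "openin (top_of_set {0..1::real}) T \<and> T \<noteq> {}"
      then obtain V where V: "open V" "T = {0..1} \<inter> V" by (auto simp: openin_open)
      obtain t0 where "t0 \<in> V" "t0 \<in> {0..1::real}" using T V(2) by blast
      then have ne: "V \<inter> {0<..<1} \<noteq> {}" using open01_inner V by blast
      have "open ((+) c ` (V \<inter> {0<..<1}))" using V by (intro open_translation) auto
      moreover have "(+) c ` (V \<inter> {0<..<1}) \<noteq> {}" using ne by auto
      ultimately obtain y where y: "y \<in> (+) c ` (V \<inter> {0<..<1})" "y \<in> UU n"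
        using UU_meets_open by blast
      then obtain t where t: "t \<in> V" "t \<in> {0<..<1}" "y = c + t" by auto
      then have "t \<in> T - F n" using V y by (auto simp: F_def)
      then show "T - F n \<noteq> {}" by auto
    qed
    have sub: "F n \<subseteq> topspace (top_of_set {0..1::real})" by (auto simp: F_def)
    show ?thesis unfolding nowhere_dense_in_def closure_of_closedin[OF clo[of n]]
      using int sub by blast
  qed
  have cov: "{t \<in> {0..1}. c + t \<notin> AA} \<subseteq> \<Union>(range F)"
    unfolding AA_def F_def by blast
  show ?thesis unfolding meager_in_def
    using nd cov by (intro exI[of _ "range F"]) blast
qed

lemma ag_mult: "mult (add_group::'x::ab_group_add monoid) = (+)" unfolding add_group_def by simp
lemma ag_carrier: "carrier (add_group::'x::ab_group_add monoid) = UNIV" unfolding add_group_def by simp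
lemma ag_tr: "translate2 (add_group::'x::ab_group_add monoid) g B h = (\<lambda>x. g + x + h) ` B"
    unfolding translate2_def ag_mult by (rule refl)

lemma borel_sets_euclidean: "borel_sets (euclidean :: 'x::topological_space topology) = sets borel"
  by (simp add: borel_sets_def sets_borel)

lemma abelian_decomp:
  fixes \<phi> :: "real \<Rightarrow> 'x::{topological_space, ab_group_add}" and p :: "'x \<Rightarrow> real"
  assumes \<phi>c: "continuous_on UNIV \<phi>" and pm: "p \<in> borel_measurable borel"
    and ps: "\<And>x t. p (x + \<phi> t) = p x + t"
  shows "\<exists>N M. carrier (add_group::'x monoid) = N \<union> M \<and> haar_null add_group euclidean N
           \<and> haar_meager add_group euclidean M"
proof -
  define N where "N = {x. p x \<in> AA}"
  define M where "M = {x. p x \<notin> AA}"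
  have N_b: "N \<in> sets borel"
    using measurable_sets[OF pm AA_borel] by (simp add: N_def vimage_def)
  have M_b: "M \<in> sets borel"
    using measurable_sets[OF pm sets.compl_sets[OF AA_borel]] by (simp add: M_def vimage_def)
  note tr = ag_tr
  have pre: "\<phi> t \<in> translate2 add_group g B h \<Longrightarrow> B \<subseteq> {x. p x \<in> S} \<Longrightarrow> p (- g - h) + t \<in> S"
    for g h t B S
  proof -
    assume a: "\<phi> t \<in> translate2 add_group g B h" "B \<subseteq> {x. p x \<in> S}"
    then obtain x where x: "x \<in> B" "\<phi> t = g + x + h" by (auto simp: tr)
    then have "x = (- g - h) + \<phi> t" by (simp add: algebra_simps)
    then have "p x = p (- g - h) + t" using ps by simp
    then show ?thesis using a x by auto
  qed
  define \<nu> where "\<nu> = uniform_measure lborel {0..1::real}"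
  have \<nu>p: "prob_space \<nu>" unfolding \<nu>_def by (rule prob_space_uniform_measure) auto
  have \<phi>m: "\<phi> \<in> \<nu> \<rightarrow>\<^sub>M borel"
  proof -
    have "measurable (uniform_measure lborel {0..1::real}) (borel::'x measure) = measurable borel borel"
      by (rule measurable_cong_sets) auto
    then show ?thesis unfolding \<nu>_def using borel_measurable_continuous_onI[OF \<phi>c] by simp
  qed
  define \<mu> where "\<mu> = distr \<nu> borel \<phi>"
  have hn: "haar_null add_group euclidean N"
    unfolding haar_null_def
  proof (intro exI conjI ballI)
    show "N \<in> borel_sets euclidean" using N_b by (simp add: borel_sets_euclidean)
    show "sets \<mu> = borel_sets euclidean" by (simp add: \<mu>_def borel_sets_euclidean)
    show "prob_space \<mu>" unfolding \<mu>_def by (rule prob_space.prob_space_distr[OF \<nu>p \<phi>m])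
    show "N \<subseteq> N" by simp
    fix g h
    let ?X = "translate2 add_group g N h"
    show "emeasure \<mu> ?X = 0"
    proof (cases "?X \<in> sets borel")
      case False then show ?thesis by (simp add: \<mu>_def emeasure_notin_sets)
    next
      case True
      have "emeasure \<mu> ?X = emeasure \<nu> (\<phi> -` ?X \<inter> space \<nu>)"
        unfolding \<mu>_def by (rule emeasure_distr[OF \<phi>m True])
      also have "\<dots> \<le> emeasure \<nu> {t. p (- g - h) + t \<in> AA}"
      proof (rule emeasure_mono)
        show "\<phi> -` ?X \<inter> space \<nu> \<subseteq> {t. p (- g - h) + t \<in> AA}"
        proof (intro subsetI)
          fix t assume t: "t \<in> \<phi> -` ?X \<inter> space \<nu>"
          have "N \<subseteq> {x. p x \<in> AA}" by (simp add: N_def)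
          then have "p (- g - h) + t \<in> AA" using pre[of t g N h AA] t by blast
          then show "t \<in> {t. p (- g - h) + t \<in> AA}" by simp
        qed
        show "{t. p (- g - h) + t \<in> AA} \<in> sets \<nu>"
          using AA_shift_borel by (simp add: \<nu>_def)
      qed
      also have "\<dots> = emeasure lborel ({0..1} \<inter> {t. p (- g - h) + t \<in> AA}) / emeasure lborel {0..1::real}"
        unfolding \<nu>_def using AA_shift_borel by (intro emeasure_uniform_measure) auto
      also have "emeasure lborel ({0..1} \<inter> {t. p (- g - h) + t \<in> AA}) = 0"
      proof -
        have "emeasure lborel ({0..1} \<inter> {t. p (- g - h) + t \<in> AA}) \<le> emeasure lborel {t. p (- g - h) + t \<in> AA}"
          using AA_shift_borel by (intro emeasure_mono) auto
        then show ?thesis using AA_shift_null by simp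
      qed
      finally show ?thesis by simp
    qed
  qed
  have hm: "haar_meager add_group euclidean M"
    unfolding haar_meager_def
  proof (intro exI conjI ballI)
    show "M \<in> borel_sets euclidean" using M_b by (simp add: borel_sets_euclidean)
    show "Metric_space {0..1::real} dist" by (rule Met_TC.subspace) auto
    show "{0..1::real} \<noteq> {}" by auto
    show "M \<subseteq> M" by simp
    show "compact_space (Metric_space.mtopology {0..1::real} dist)"
      unfolding mtop01 by (metis compact_Icc compactin_euclidean_iff compact_space_subtopology)
    show "continuous_map (Metric_space.mtopology {0..1::real} dist) euclidean \<phi>"
      unfolding mtop01 continuous_map_iff_continuous using \<phi>c continuous_on_subset by blast
    fix g h
    have sub: "{x \<in> {0..1}. \<phi> x \<in> translate2 add_group g M h} \<subseteq> {t \<in> {0..1}. p (- g - h) + t \<notin> AA}"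
    proof (intro subsetI)
      fix x assume x: "x \<in> {x \<in> {0..1}. \<phi> x \<in> translate2 add_group g M h}"
      have "M \<subseteq> {x. p x \<in> - AA}" by (auto simp: M_def)
      then have "p (- g - h) + x \<in> - AA" using pre[of x g M h "- AA"] x by blast
      then show "x \<in> {t \<in> {0..1}. p (- g - h) + t \<notin> AA}" using x by simp
    qed
    obtain F where F: "countable F" "\<forall>N\<in>F. nowhere_dense_in (top_of_set {0..1::real}) N"
        "{t \<in> {0..1}. p (- g - h) + t \<notin> AA} \<subseteq> \<Union>F"
      using meager_shift[of "p (- g - h)"] unfolding meager_in_def by blast
    show "meager_in (Metric_space.mtopology {0..1::real} dist) {x \<in> {0..1}. \<phi> x \<in> translate2 add_group g M h}"
      unfolding mtop01 meager_in_def using F sub by (intro exI[of _ F]) blast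
  qed
  have "carrier (add_group::'x monoid) = N \<union> M" unfolding ag_carrier by (auto simp: N_def M_def)
  then show ?thesis using hn hm by blast
qed



lemma banach_p:
  fixes e :: "'x::real_normed_vector"
  assumes e: "e \<noteq> 0"
  shows "\<exists>p::'x \<Rightarrow> real. p \<in> borel_measurable borel \<and> (\<forall>x t. p (x + t *\<^sub>R e) = p x + t)"
proof -
  define L where "L = range (\<lambda>t::real. t *\<^sub>R e)"
  define S where "S y = {t::real. norm (y - t *\<^sub>R e) < infdist y L + 1}" for y
  define p where "p y = Inf (S y)" for y
  have Lne: "L \<noteq> {}" by (auto simp: L_def)
  have inf_eq: "infdist y L = (INF t. dist y (t *\<^sub>R e))" for y
    unfolding infdist_def L_def by (simp add: image_image)
  have Sne: "S y \<noteq> {}" for y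
  proof -
    have "(INF t. dist y (t *\<^sub>R e)) < infdist y L + 1" using inf_eq by simp
    then obtain t where "dist y (t *\<^sub>R e) < infdist y L + 1"
      by (subst (asm) cINF_less_iff) (auto intro: bdd_belowI[of _ 0])
    then have "t \<in> S y" by (simp add: S_def dist_norm)
    then show ?thesis by auto
  qed
  have Sbdd: "bdd_below (S y)" for y
  proof (rule bdd_belowI)
    fix t assume t: "t \<in> S y"
    have "\<bar>t\<bar> * norm e = norm (t *\<^sub>R e)" by simp
    also have "\<dots> \<le> norm y + norm (y - t *\<^sub>R e)" by (metis norm_triangle_sub add.commute norm_minus_commute)
    also have "\<dots> \<le> norm y + (infdist y L + 1)" using t by (simp add: S_def)
    finally have "\<bar>t\<bar> \<le> (norm y + (infdist y L + 1)) / norm e"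
      using e by (simp add: pos_le_divide_eq)
    then show "- ((norm y + (infdist y L + 1)) / norm e) \<le> t" by linarith
  qed
  have Sopen: "open (S y)" for y
  proof -
    have "S y = (\<lambda>t. norm (y - t *\<^sub>R e)) -` {..< infdist y L + 1}" by (auto simp: S_def)
    moreover have "open ((\<lambda>t. norm (y - t *\<^sub>R e)) -` {..< infdist y L + 1})"
      by (intro continuous_open_vimage) (auto intro!: continuous_intros)
    ultimately show ?thesis by simp
  qed
  have inf_shift: "infdist (y + s *\<^sub>R e) L = infdist y L" for y s
  proof -
    have "range (\<lambda>t. dist (y + s *\<^sub>R e) (t *\<^sub>R e)) = range (\<lambda>t. dist y (t *\<^sub>R e))"
    proof -
      have 1: "dist (y + s *\<^sub>R e) (t *\<^sub>R e) = dist y ((t - s) *\<^sub>R e)" for t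
        by (simp add: dist_norm algebra_simps)
      have 2: "dist y (t *\<^sub>R e) = dist (y + s *\<^sub>R e) ((t + s) *\<^sub>R e)" for t
        by (simp add: dist_norm algebra_simps)
      have r: "range (\<lambda>t::real. t - s) = UNIV"
        by (auto intro: image_eqI[where x="x + s" for x])
      have "range (\<lambda>t. dist (y + s *\<^sub>R e) (t *\<^sub>R e)) = (\<lambda>t. dist y (t *\<^sub>R e)) ` range (\<lambda>t. t - s)"
        by (simp only: image_image 1)
      then show ?thesis using r by simp
    qed
    then show ?thesis unfolding inf_eq by simp
  qed
  have S_shift: "S (y + s *\<^sub>R e) = (+) s ` S y" for y s
  proof -
    have 1: "norm (y + s *\<^sub>R e - t *\<^sub>R e) = norm (y - (t - s) *\<^sub>R e)" for t
      by (simp add: algebra_simps)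
    show ?thesis unfolding S_def inf_shift
      by (auto simp: image_iff 1) (metis add_diff_cancel_left' add_diff_eq diff_add_cancel)
  qed
  have p_shift: "p (y + s *\<^sub>R e) = p y + s" for y s
  proof -
    have "Inf ((+) s ` S y) = s + Inf (S y)"
    proof (rule antisym)
      show "Inf ((+) s ` S y) \<le> s + Inf (S y)"
      proof -
        have "Inf ((+) s ` S y) - s \<le> Inf (S y)"
        proof (rule cInf_greatest[OF Sne])
          fix t assume "t \<in> S y"
          obtain M where M: "\<forall>x\<in>S y. M \<le> x" using Sbdd[of y] by (auto simp: bdd_below_def)
          have "bdd_below ((+) s ` S y)" using M by (intro bdd_belowI[of _ "s + M"]) auto
          then have "Inf ((+) s ` S y) \<le> s + t"
            using \<open>t \<in> S y\<close> by (intro cInf_lower) auto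
          then show "Inf ((+) s ` S y) - s \<le> t" by simp
        qed
        then show ?thesis by simp
      qed
      show "s + Inf (S y) \<le> Inf ((+) s ` S y)"
      proof (rule cInf_greatest)
        show "(+) s ` S y \<noteq> {}" using Sne by auto
        fix u assume "u \<in> (+) s ` S y"
        then obtain t where t: "t \<in> S y" "u = s + t" by auto
        then have "Inf (S y) \<le> t" using Sbdd by (intro cInf_lower) auto
        then show "s + Inf (S y) \<le> u" using t by simp
      qed
    qed
    then show ?thesis unfolding p_def S_shift by simp
  qed
  have pm: "p \<in> borel_measurable borel"
    unfolding borel_measurable_iff_less
  proof
    fix a
    have eq: "{w \<in> space borel. p w < a} = (\<Union>q\<in>\<rat> \<inter> {..<a}. {y. norm (y - q *\<^sub>R e) < infdist y L + 1})"
    proof (rule Set.set_eqI, rule iffI)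
      fix y assume "y \<in> {w \<in> space borel. p w < a}"
      then have "p y < a" by simp
      then obtain t where t: "t \<in> S y" "t < a" unfolding p_def using cInf_less_iff[OF Sne Sbdd] by blast
      then have "t \<in> S y \<inter> {..<a}" by simp
      moreover have "open (S y \<inter> {..<a})" using Sopen by auto
      ultimately obtain q where "q \<in> \<rat>" "q \<in> S y \<inter> {..<a}" using open_has_rat by blast
      then show "y \<in> (\<Union>q\<in>\<rat> \<inter> {..<a}. {y. norm (y - q *\<^sub>R e) < infdist y L + 1})"
        by (auto simp: S_def)
    next
      fix y assume "y \<in> (\<Union>q\<in>\<rat> \<inter> {..<a}. {y. norm (y - q *\<^sub>R e) < infdist y L + 1})"
      then obtain q where q: "q < a" "q \<in> S y" by (auto simp: S_def)
      then have "p y \<le> q" unfolding p_def using Sbdd by (intro cInf_lower) auto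
      then show "y \<in> {w \<in> space borel. p w < a}" using q by simp
    qed
    have op: "open {y. norm (y - q *\<^sub>R e) < infdist y L + 1}" for q :: real
    proof -
      have "continuous_on UNIV (\<lambda>y. infdist y L + 1 - norm (y - q *\<^sub>R e))"
        by (intro continuous_intros continuous_on_infdist continuous_on_id)
      then have "open ((\<lambda>y. infdist y L + 1 - norm (y - q *\<^sub>R e)) -` {0<..})"
        by (simp add: continuous_on_open_vimage)
      moreover have "{y. norm (y - q *\<^sub>R e) < infdist y L + 1} = (\<lambda>y. infdist y L + 1 - norm (y - q *\<^sub>R e)) -` {0<..}"
        by auto
      ultimately show ?thesis by simp
    qed
    show "{w \<in> space borel. p w < a} \<in> sets borel"
      unfolding eq using op by (intro sets.countable_UN') (auto simp: countable_rat)
  qed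
  show ?thesis using pm p_shift by blast
qed



locale pg_ctx = group G + Metric_space "carrier G" d
  for G :: "('a, 'b) monoid_scheme" (structure) and d :: "'a \<Rightarrow> 'a \<Rightarrow> real" +
  fixes H :: "'a set"
  assumes mc: "mcomplete"
    and sep: "separable_space mtopology"
    and mcont: "continuous_map (prod_topology mtopology mtopology) mtopology (\<lambda>(x, y). x \<otimes> y)"
    and icont: "continuous_map mtopology mtopology (\<lambda>x. inv x)"
    and sub: "subgroup H G" and cl: "closedin mtopology H" and cen: "H \<subseteq> group_center G"
begin

lemma H_sub: "H \<subseteq> carrier G" by (rule subgroup.subset[OF sub])
lemma H_one: "\<one> \<in> H" by (rule subgroup.one_closed[OF sub])
lemma H_mult: "x \<in> H \<Longrightarrow> y \<in> H \<Longrightarrow> x \<otimes> y \<in> H" by (rule subgroup.m_closed[OF sub])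
lemma H_inv: "x \<in> H \<Longrightarrow> inv x \<in> H" by (rule subgroup.m_inv_closed[OF sub])
lemma H_car: "x \<in> H \<Longrightarrow> x \<in> carrier G" using H_sub by (rule subsetD)
lemma H_comm: assumes "t \<in> H" "x \<in> carrier G" shows "t \<otimes> x = x \<otimes> t"
proof -
  have "t \<in> group_center G" using cen assms(1) by (rule subsetD)
  then show ?thesis using assms(2) unfolding group_center_def by blast
qed

lemma cont_rmult: "a \<in> carrier G \<Longrightarrow> continuous_map mtopology mtopology (\<lambda>y. y \<otimes> a)"
proof -
  assume a: "a \<in> carrier G"
  have "continuous_map mtopology (prod_topology mtopology mtopology) (\<lambda>y. (y, a))"
    using a by (intro continuous_map_pairedI) (simp_all add: continuous_map_const continuous_map_id[unfolded id_def])
  from continuous_map_compose[OF this mcont] show ?thesis by (simp add: o_def)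
qed

lemma cont_lmult: "a \<in> carrier G \<Longrightarrow> continuous_map mtopology mtopology (\<lambda>y. a \<otimes> y)"
proof -
  assume a: "a \<in> carrier G"
  have "continuous_map mtopology (prod_topology mtopology mtopology) (\<lambda>y. (a, y))"
    using a by (intro continuous_map_pairedI) (simp_all add: continuous_map_const continuous_map_id[unfolded id_def])
  from continuous_map_compose[OF this mcont] show ?thesis by (simp add: o_def)
qed

lemma cont_invmult: "a \<in> carrier G \<Longrightarrow> continuous_map mtopology mtopology (\<lambda>z. inv z \<otimes> a)"
proof -
  assume a: "a \<in> carrier G"
  have "continuous_map mtopology (prod_topology mtopology mtopology) (\<lambda>y. (inv y, a))"
    using a icont by (intro continuous_map_pairedI) (simp_all add: continuous_map_const)
  from continuous_map_compose[OF this mcont] show ?thesis by (simp add: o_def)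
qed

definition PP :: "'a \<Rightarrow> 'a \<Rightarrow> real \<Rightarrow> bool" where
  "PP q y r \<longleftrightarrow> (\<exists>h\<in>H. d q (y \<otimes> h) < r)"

lemma PP_inv: assumes "y \<in> carrier G" "t \<in> H" shows "PP q (y \<otimes> t) r \<longleftrightarrow> PP q y r"
proof
  assume "PP q (y \<otimes> t) r"
  then obtain h where h: "h \<in> H" "d q (y \<otimes> t \<otimes> h) < r" by (auto simp: PP_def)
  have "y \<otimes> t \<otimes> h = y \<otimes> (t \<otimes> h)" using assms h H_car by (simp add: m_assoc)
  then show "PP q y r" using h H_mult[OF assms(2) h(1)] by (auto simp: PP_def)
next
  assume "PP q y r"
  then obtain h where h: "h \<in> H" "d q (y \<otimes> h) < r" by (auto simp: PP_def)
  have "y \<otimes> h = y \<otimes> t \<otimes> (inv t \<otimes> h)" using assms h H_car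
    by (simp add: m_assoc[symmetric] r_inv) (simp add: m_assoc)
  then show "PP q (y \<otimes> t) r" using h H_mult[OF H_inv[OF assms(2)] h(1)] by (auto simp: PP_def)
qed

lemma PP_open: assumes q: "q \<in> carrier G" shows "openin mtopology {y \<in> carrier G. PP q y r}"
proof -
  have "{y \<in> carrier G. PP q y r} = (\<Union>h\<in>H. {y \<in> topspace mtopology. y \<otimes> h \<in> mball q r})"
    unfolding PP_def using q H_car by (auto simp: commute)
  moreover have "openin mtopology {y \<in> topspace mtopology. y \<otimes> h \<in> mball q r}" if "h \<in> H" for h
    using openin_continuous_map_preimage[OF cont_rmult[OF H_car[OF that]] openin_mball] .
  ultimately show ?thesis by auto
qed

definition DD :: "'a set" where
  "DD = (SOME C. countable C \<and> C \<subseteq> carrier G \<and> mtopology closure_of C = carrier G)"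

lemma DD: "countable DD" "DD \<subseteq> carrier G" "mtopology closure_of DD = carrier G"
proof -
  have "\<exists>C. countable C \<and> C \<subseteq> carrier G \<and> mtopology closure_of C = carrier G"
    using sep unfolding separable_space_def topspace_mtopology .
  then have "countable DD \<and> DD \<subseteq> carrier G \<and> mtopology closure_of DD = carrier G"
    unfolding DD_def by (rule someI_ex)
  then show "countable DD" "DD \<subseteq> carrier G" "mtopology closure_of DD = carrier G" by auto
qed

lemma DD_ne: "DD \<noteq> {}"
proof
  assume "DD = {}"
  then have "carrier G = {}" using DD(3) by simp
  then show False using one_closed by simp
qed

definition qs :: "nat \<Rightarrow> 'a" where "qs = from_nat_into DD"

lemma qs_car: "qs n \<in> carrier G"
  unfolding qs_def using from_nat_into[OF DD_ne] DD(2) by blast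

lemma qs_dense: assumes "x \<in> carrier G" "e > 0" shows "\<exists>n. d (qs n) x < e"
proof -
  have "x \<in> mtopology closure_of DD" using DD(3) assms(1) by simp
  then obtain y where y: "y \<in> DD" "y \<in> mball x e" using assms(2) unfolding metric_closure_of by blast
  then obtain n where "y = qs n" unfolding qs_def using range_from_nat_into[OF DD_ne DD(1)] by blast
  then show ?thesis using y by (auto simp: commute)
qed

lemma ex_start: assumes "y \<in> carrier G" shows "\<exists>n. PP (qs n) y 1"
proof -
  obtain n where "d (qs n) y < 1" using qs_dense[OF assms, of 1] by auto
  then have "d (qs n) (y \<otimes> \<one>) < 1" using assms by simp
  then show ?thesis using H_one unfolding PP_def by blast
qed

lemma ex_next: assumes y: "y \<in> carrier G" and q: "q \<in> carrier G" and P: "PP q y \<rho>"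
  shows "\<exists>n. PP (qs n) y (\<rho>/2) \<and> d (qs n) q < \<rho>"
proof -
  obtain h where h: "h \<in> H" "d q (y \<otimes> h) < \<rho>" using P unfolding PP_def by blast
  have yh: "y \<otimes> h \<in> carrier G" using y H_car[OF h(1)] by simp
  define e where "e = min (\<rho> - d q (y \<otimes> h)) (\<rho>/2)"
  have "0 \<le> d q (y \<otimes> h)" by (rule nonneg)
  then have "\<rho> > 0" using h(2) by linarith
  then have e: "e > 0" using h(2) by (simp add: e_def)
  obtain n where n: "d (qs n) (y \<otimes> h) < e" using qs_dense[OF yh e] by blast
  have "PP (qs n) y (\<rho>/2)" unfolding PP_def using n h(1) by (intro bexI[of _ h]) (auto simp: e_def)
  moreover have "d (qs n) q < \<rho>"
  proof -
    have "d (qs n) q \<le> d (qs n) (y \<otimes> h) + d (y \<otimes> h) q" using triangle[OF qs_car yh q] .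
    also have "\<dots> < \<rho>" using n h(2) commute[of q "y \<otimes> h"] by (auto simp: e_def)
    finally show ?thesis .
  qed
  ultimately show ?thesis by blast
qed

primrec idx :: "nat \<Rightarrow> 'a \<Rightarrow> nat" where
  "idx 0 y = (LEAST n. PP (qs n) y 1)"
| "idx (Suc k) y = (LEAST n. PP (qs n) y ((1/2)^(Suc k)) \<and> d (qs n) (qs (idx k y)) < (1/2)^k)"

definition ss :: "nat \<Rightarrow> 'a \<Rightarrow> 'a" where "ss k y = qs (idx k y)"

lemma ss_car: "ss k y \<in> carrier G" by (simp add: ss_def qs_car)

lemma ss_P: assumes "y \<in> carrier G" shows "PP (ss k y) y ((1/2)^k)"
proof (induction k)
  case 0
  show ?case unfolding ss_def idx.simps using LeastI_ex[OF ex_start[OF assms]] by simp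
next
  case (Suc k)
  have "\<exists>n. PP (qs n) y ((1/2)^k / 2) \<and> d (qs n) (ss k y) < (1/2)^k"
    using ex_next[OF assms ss_car Suc] .
  then have "\<exists>n. PP (qs n) y ((1/2)^(Suc k)) \<and> d (qs n) (qs (idx k y)) < (1/2)^k"
    by (simp add: ss_def)
  from LeastI_ex[OF this] show ?case unfolding ss_def idx.simps by simp
qed

lemma ss_step: assumes "y \<in> carrier G" shows "d (ss (Suc k) y) (ss k y) < (1/2)^k"
proof -
  have "\<exists>n. PP (qs n) y ((1/2)^k / 2) \<and> d (qs n) (ss k y) < (1/2)^k"
    using ex_next[OF assms ss_car ss_P[OF assms]] .
  then have "\<exists>n. PP (qs n) y ((1/2)^(Suc k)) \<and> d (qs n) (qs (idx k y)) < (1/2)^k"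
    by (simp add: ss_def)
  from LeastI_ex[OF this] show ?thesis unfolding ss_def idx.simps by simp
qed

lemma idx_inv: assumes "y \<in> carrier G" "t \<in> H" shows "idx k (y \<otimes> t) = idx k y"
proof (induction k)
  case 0
  show ?case using PP_inv[OF assms] by simp
next
  case (Suc k)
  show ?case using PP_inv[OF assms] Suc by simp
qed

lemma ss_dist: assumes y: "y \<in> carrier G" and mn: "m \<le> n"
  shows "d (ss m y) (ss n y) \<le> 2 * (1/2)^m - 2 * (1/2)^n"
  using mn
proof (induction n rule: dec_induct)
  case base
  show ?case using mdist_zero[OF ss_car] by simp
next
  case (step n)
  have "d (ss m y) (ss (Suc n) y) \<le> d (ss m y) (ss n y) + d (ss n y) (ss (Suc n) y)"
    by (rule triangle[OF ss_car ss_car ss_car])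
  also have "\<dots> \<le> 2 * (1/2)^m - 2 * (1/2)^n + (1/2)^n"
    using step.IH ss_step[OF y, of n] commute[of "ss n y" "ss (Suc n) y"] by linarith
  also have "\<dots> = 2 * (1/2)^m - 2 * (1/2)^(Suc n)" by simp
  finally show ?case .
qed

lemma half_pow_ev: "c > 0 \<Longrightarrow> eventually (\<lambda>k. (1/2::real)^k < c) sequentially"
proof -
  assume c: "c > 0"
  have "((\<lambda>k. (1/2::real)^k) \<longlongrightarrow> 0) sequentially" by (rule LIMSEQ_power_zero) simp
  from order_tendstoD(2)[OF this c] show ?thesis .
qed

lemma ss_cauchy: assumes y: "y \<in> carrier G" shows "MCauchy (\<lambda>k. ss k y)"
  unfolding MCauchy_def
proof (intro conjI allI impI)
  show "range (\<lambda>k. ss k y) \<subseteq> carrier G" using ss_car by auto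
  fix e :: real assume e: "e > 0"
  obtain N where N: "(1/2::real)^N < e/2" using real_arch_pow_inv[of "e/2" "1/2::real"] e by auto
  have key: "d (ss n y) (ss n' y) < e" if "N \<le> n" "n \<le> n'" for n n'
  proof -
    have "d (ss n y) (ss n' y) \<le> 2 * (1/2)^n - 2 * (1/2)^n'" by (rule ss_dist[OF y that(2)])
    also have "\<dots> \<le> 2 * (1/2::real)^n" by simp
    also have "\<dots> \<le> 2 * (1/2::real)^N" using that(1) by (simp add: power_decreasing)
    also have "\<dots> < e" using N by simp
    finally show ?thesis .
  qed
  show "\<exists>N. \<forall>n n'. N \<le> n \<longrightarrow> N \<le> n' \<longrightarrow> d (ss n y) (ss n' y) < e"
  proof (intro exI allI impI)
    fix n n' assume "N \<le> n" "N \<le> n'"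
    then show "d (ss n y) (ss n' y) < e"
      using key[of n n'] key[of n' n] commute[of "ss n y" "ss n' y"] by (cases "n \<le> n'") auto
  qed
qed

definition sl :: "'a \<Rightarrow> 'a" where
  "sl y = (SOME l. limitin mtopology (\<lambda>k. ss k y) l sequentially)"

lemma sl_lim: assumes y: "y \<in> carrier G" shows "limitin mtopology (\<lambda>k. ss k y) (sl y) sequentially"
proof -
  have "\<exists>l. limitin mtopology (\<lambda>k. ss k y) l sequentially"
    using mc ss_cauchy[OF y] unfolding mcomplete_def by blast
  then show ?thesis unfolding sl_def by (rule someI_ex)
qed

lemma sl_car: "y \<in> carrier G \<Longrightarrow> sl y \<in> carrier G"
  using sl_lim limitin_mspace by blast

lemma sl_inv: assumes "y \<in> carrier G" "t \<in> H" shows "sl (y \<otimes> t) = sl y"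
  unfolding sl_def ss_def idx_inv[OF assms] ..

lemma sl_coset: assumes y: "y \<in> carrier G" shows "inv y \<otimes> sl y \<in> H"
proof -
  define hh where "hh k = (SOME h. h \<in> H \<and> d (ss k y) (y \<otimes> h) < (1/2)^k)" for k
  have hh: "hh k \<in> H \<and> d (ss k y) (y \<otimes> hh k) < (1/2)^k" for k
  proof -
    have "\<exists>h. h \<in> H \<and> d (ss k y) (y \<otimes> h) < (1/2)^k"
      using ss_P[OF y, of k] unfolding PP_def by blast
    then show ?thesis unfolding hh_def by (rule someI_ex)
  qed
  have yh: "y \<otimes> hh k \<in> carrier G" for k using y H_car hh by simp
  have lim1: "limitin mtopology (\<lambda>k. y \<otimes> hh k) (sl y) sequentially"
    unfolding limitin_metric
  proof (intro conjI allI impI)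
    show "sl y \<in> carrier G" by (rule sl_car[OF y])
    fix e :: real assume e: "e > 0"
    have ev1: "\<forall>\<^sub>F k in sequentially. ss k y \<in> carrier G \<and> d (ss k y) (sl y) < e/2"
    proof -
      have "e/2 > 0" using e by simp
      then show ?thesis using sl_lim[OF y] unfolding limitin_metric by blast
    qed
    have ev2: "\<forall>\<^sub>F k in sequentially. (1/2::real)^k < e/2" by (rule half_pow_ev) (use e in simp)
    show "\<forall>\<^sub>F k in sequentially. y \<otimes> hh k \<in> carrier G \<and> d (y \<otimes> hh k) (sl y) < e"
      using ev1 ev2
    proof eventually_elim
      case (elim k)
      have "d (y \<otimes> hh k) (sl y) \<le> d (y \<otimes> hh k) (ss k y) + d (ss k y) (sl y)"
        by (rule triangle[OF yh ss_car sl_car[OF y]])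
      also have "\<dots> < e" using elim hh[of k] commute[of "y \<otimes> hh k" "ss k y"] by linarith
      finally show ?case using yh by simp
    qed
  qed
  have iy: "inv y \<in> carrier G" using y by simp
  have lim2: "limitin mtopology ((\<lambda>z. inv y \<otimes> z) \<circ> (\<lambda>k. y \<otimes> hh k)) (inv y \<otimes> sl y) sequentially"
    by (rule continuous_map_limit[OF cont_lmult[OF iy] lim1])
  have eq: "((\<lambda>z. inv y \<otimes> z) \<circ> (\<lambda>k. y \<otimes> hh k)) = hh"
  proof
    fix k
    show "((\<lambda>z. inv y \<otimes> z) \<circ> (\<lambda>k. y \<otimes> hh k)) k = hh k"
    proof -
      have "hh k \<in> carrier G" using H_car hh by blast
      then have "inv y \<otimes> (y \<otimes> hh k) = hh k" using y by (simp add: m_assoc[symmetric] l_inv)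
      then show ?thesis by simp
    qed
  qed
  have ev: "\<forall>\<^sub>F k in sequentially. hh k \<in> H" using hh by simp
  show ?thesis
    using limitin_closedin[OF lim2[unfolded eq] cl ev trivial_limit_sequentially] .
qed

definition ww :: "'a \<Rightarrow> 'a" where "ww y = inv (sl y) \<otimes> y"

lemma ww_H: assumes y: "y \<in> carrier G" shows "ww y \<in> H"
proof -
  have "ww y = inv (inv y \<otimes> sl y)" unfolding ww_def
    using y sl_car[OF y] by (simp add: inv_mult_group)
  then show ?thesis using H_inv[OF sl_coset[OF y]] by simp
qed

lemma ww_shift: assumes "y \<in> carrier G" "t \<in> H" shows "ww (y \<otimes> t) = ww y \<otimes> t"
  unfolding ww_def sl_inv[OF assms] using assms H_car sl_car[OF assms(1)] by (simp add: m_assoc)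

definition MM :: "'a measure" where "MM = sigma (carrier G) {U. openin mtopology U}"

lemma opens_Pow: "{U. openin mtopology U} \<subseteq> Pow (carrier G)"
  using openin_subset[of mtopology] by auto

lemma sets_MM: "sets MM = sigma_sets (carrier G) {U. openin mtopology U}"
  unfolding MM_def by (rule sets_measure_of[OF opens_Pow])

lemma space_MM: "space MM = carrier G"
  unfolding MM_def by (rule space_measure_of[OF opens_Pow])

lemma open_MM: "openin mtopology U \<Longrightarrow> U \<in> sets MM"
  unfolding sets_MM by (rule sigma_sets.Basic) simp

lemma least_meas:
  fixes Q :: "nat \<Rightarrow> 'a \<Rightarrow> bool"
  assumes ex: "\<And>y. y \<in> carrier G \<Longrightarrow> \<exists>n. Q n y"
    and ms: "\<And>n. {y \<in> carrier G. Q n y} \<in> sets MM"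
  shows "{y \<in> carrier G. (LEAST n. Q n y) = n} \<in> sets MM"
proof -
  have eq: "{y \<in> carrier G. (LEAST n. Q n y) = n} =
      {y \<in> carrier G. Q n y} - (\<Union>m\<in>{..<n}. {y \<in> carrier G. Q m y})"
  proof (rule Set.set_eqI, rule iffI)
    fix y assume y: "y \<in> {y \<in> carrier G. (LEAST n. Q n y) = n}"
    then have yc: "y \<in> carrier G" by simp
    have "Q (LEAST n. Q n y) y" using ex[OF yc] by (rule LeastI_ex)
    then have "Q n y" using y by simp
    moreover have "\<not> Q m y" if "m < n" for m using not_less_Least[of m "\<lambda>n. Q n y"] y that by auto
    ultimately show "y \<in> {y \<in> carrier G. Q n y} - (\<Union>m\<in>{..<n}. {y \<in> carrier G. Q m y})"
      using y by auto
  next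
    fix y assume y: "y \<in> {y \<in> carrier G. Q n y} - (\<Union>m\<in>{..<n}. {y \<in> carrier G. Q m y})"
    then have q: "Q n y" "y \<in> carrier G" and nq: "\<And>m. m < n \<Longrightarrow> \<not> Q m y" by auto
    have "(LEAST n. Q n y) = n"
      by (rule Least_equality[where P="\<lambda>n. Q n y", OF q(1)]) (use nq not_le in blast)
    then show "y \<in> {y \<in> carrier G. (LEAST n. Q n y) = n}" using q by simp
  qed
  show ?thesis unfolding eq using ms by (intro sets.Diff sets.finite_UN) auto
qed

lemma LV_meas: "{y \<in> carrier G. idx k y = n} \<in> sets MM"
proof (induction k arbitrary: n)
  case 0
  show ?case unfolding idx.simps
    using least_meas[where Q="\<lambda>n y. PP (qs n) y 1", OF ex_start open_MM[OF PP_open[OF qs_car]]] .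
next
  case (Suc k)
  have ex: "\<exists>n. PP (qs n) y ((1/2)^(Suc k)) \<and> d (qs n) (qs (idx k y)) < (1/2)^k" if "y \<in> carrier G" for y
  proof -
    have "\<exists>n. PP (qs n) y ((1/2)^k / 2) \<and> d (qs n) (ss k y) < (1/2)^k"
      using ex_next[OF that ss_car ss_P[OF that]] .
    then show ?thesis by (simp add: ss_def)
  qed
  have ms: "{y \<in> carrier G. PP (qs n) y ((1/2)^(Suc k)) \<and> d (qs n) (qs (idx k y)) < (1/2)^k} \<in> sets MM" for n
  proof -
    have eq: "{y \<in> carrier G. PP (qs n) y ((1/2)^(Suc k)) \<and> d (qs n) (qs (idx k y)) < (1/2)^k} =
      {y \<in> carrier G. PP (qs n) y ((1/2)^(Suc k))} \<inter>
      (\<Union>m\<in>{m. d (qs n) (qs m) < (1/2)^k}. {y \<in> carrier G. idx k y = m})"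
      by auto
    show ?thesis unfolding eq
      by (intro sets.Int open_MM[OF PP_open[OF qs_car]] sets.countable_UN) (auto intro: Suc.IH)
  qed
  show ?case unfolding idx.simps by (rule least_meas[OF ex ms])
qed

lemma ww_car: "y \<in> carrier G \<Longrightarrow> ww y \<in> carrier G" using ww_H H_car by blast

lemma ww_lim: assumes y: "y \<in> carrier G"
  shows "limitin mtopology (\<lambda>k. inv (ss k y) \<otimes> y) (ww y) sequentially"
  using continuous_map_limit[OF cont_invmult[OF y] sl_lim[OF y]] by (simp add: ww_def o_def)

lemma ball_sub_meas: assumes V: "openin mtopology V" and x: "x \<in> carrier G"
  shows "{y \<in> carrier G. mball (x \<otimes> y) r \<subseteq> V} \<in> sets MM"
proof -
  define \<Omega> where "\<Omega> = (\<Union>z\<in>carrier G - V. mball z r)"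
  have op: "openin mtopology \<Omega>" unfolding \<Omega>_def by (intro openin_Union) auto
  have eq: "{y \<in> carrier G. mball (x \<otimes> y) r \<subseteq> V} = carrier G - {y \<in> topspace mtopology. x \<otimes> y \<in> \<Omega>}"
  proof (rule Set.set_eqI, rule iffI)
    fix y assume y: "y \<in> {y \<in> carrier G. mball (x \<otimes> y) r \<subseteq> V}"
    then have "x \<otimes> y \<notin> \<Omega>" unfolding \<Omega>_def by (auto simp: commute)
    then show "y \<in> carrier G - {y \<in> topspace mtopology. x \<otimes> y \<in> \<Omega>}" using y by auto
  next
    fix y assume y: "y \<in> carrier G - {y \<in> topspace mtopology. x \<otimes> y \<in> \<Omega>}"
    then have yc: "y \<in> carrier G" and n: "x \<otimes> y \<notin> \<Omega>" by auto
    have "mball (x \<otimes> y) r \<subseteq> V"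
    proof
      fix z assume z: "z \<in> mball (x \<otimes> y) r"
      show "z \<in> V"
      proof (rule ccontr)
        assume "z \<notin> V"
        then have "x \<otimes> y \<in> \<Omega>" using z unfolding \<Omega>_def by (auto simp: commute)
        then show False using n by simp
      qed
    qed
    then show "y \<in> {y \<in> carrier G. mball (x \<otimes> y) r \<subseteq> V}" using yc by simp
  qed
  have "openin mtopology {y \<in> topspace mtopology. x \<otimes> y \<in> \<Omega>}"
    by (rule openin_continuous_map_preimage[OF cont_lmult[OF x] op])
  then have "{y \<in> topspace mtopology. x \<otimes> y \<in> \<Omega>} \<in> sets MM" by (rule open_MM)
  then show ?thesis unfolding eq using sets.compl_sets[of _ MM] space_MM by metis
qed

lemma ww_open_meas: assumes V: "openin mtopology V"
  shows "{y \<in> carrier G. ww y \<in> V} \<in> sets MM"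
proof -
  define E where "E m k = {y \<in> carrier G. mball (inv (ss k y) \<otimes> y) (1 / Suc m) \<subseteq> V}" for m k
  have Em: "E m k \<in> sets MM" for m k
  proof -
    have eq: "E m k = (\<Union>n. {y \<in> carrier G. idx k y = n} \<inter> {y \<in> carrier G. mball (inv (qs n) \<otimes> y) (1 / Suc m) \<subseteq> V})"
      unfolding E_def ss_def by auto
    show ?thesis unfolding eq
      using LV_meas ball_sub_meas[OF V] qs_car by (intro sets.countable_UN sets.Int) auto
  qed
  have char: "ww y \<in> V \<longleftrightarrow> (\<exists>m j. \<forall>k. y \<in> E m (j + k))" if y: "y \<in> carrier G" for y
  proof
    assume w: "ww y \<in> V"
    obtain r where r: "r > 0" "mball (ww y) r \<subseteq> V"
      using V w unfolding openin_mtopology by blast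
    obtain m where m: "1 / real (Suc m) < r / 2"
      using reals_Archimedean[of "r/2"] r(1) by (auto simp: inverse_eq_divide)
    have "1 / real (Suc m) > 0" by simp
    then have "\<forall>\<^sub>F k in sequentially. inv (ss k y) \<otimes> y \<in> carrier G \<and> d (inv (ss k y) \<otimes> y) (ww y) < 1 / Suc m"
      using ww_lim[OF y] unfolding limitin_metric by blast
    then obtain j where j: "\<And>k. k \<ge> j \<Longrightarrow> d (inv (ss k y) \<otimes> y) (ww y) < 1 / Suc m"
      unfolding eventually_sequentially by blast
    have "y \<in> E m (j + k)" for k
    proof -
      have "mball (inv (ss (j + k) y) \<otimes> y) (1 / Suc m) \<subseteq> V"
      proof
        fix z assume z: "z \<in> mball (inv (ss (j + k) y) \<otimes> y) (1 / Suc m)"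
        have c1: "inv (ss (j + k) y) \<otimes> y \<in> carrier G" using y ss_car by simp
        have "d (ww y) z \<le> d (ww y) (inv (ss (j + k) y) \<otimes> y) + d (inv (ss (j + k) y) \<otimes> y) z"
          using triangle[OF ww_car[OF y] c1] z by auto
        also have "\<dots> < r" using j[of "j + k"] z m commute[of "ww y" "inv (ss (j + k) y) \<otimes> y"] by auto
        finally have "z \<in> mball (ww y) r" using z ww_car[OF y] by auto
        then show "z \<in> V" using r by blast
      qed
      then show ?thesis using y by (simp add: E_def)
    qed
    then show "\<exists>m j. \<forall>k. y \<in> E m (j + k)" by blast
  next
    assume "\<exists>m j. \<forall>k. y \<in> E m (j + k)"
    then obtain m j where mj: "\<And>k. y \<in> E m (j + k)" by blast
    have "1 / real (Suc m) > 0" by simp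
    then have "\<forall>\<^sub>F k in sequentially. inv (ss k y) \<otimes> y \<in> carrier G \<and> d (inv (ss k y) \<otimes> y) (ww y) < 1 / Suc m"
      using ww_lim[OF y] unfolding limitin_metric by blast
    then obtain j' where j': "\<And>k. k \<ge> j' \<Longrightarrow> d (inv (ss k y) \<otimes> y) (ww y) < 1 / Suc m"
      unfolding eventually_sequentially by blast
    have c1: "inv (ss (j + j') y) \<otimes> y \<in> carrier G" using y ss_car by simp
    have "ww y \<in> mball (inv (ss (j + j') y) \<otimes> y) (1 / Suc m)"
      using j'[of "j + j'"] c1 ww_car[OF y] by simp
    then show "ww y \<in> V" using mj[of j'] by (auto simp: E_def)
  qed
  have eq: "{y \<in> carrier G. ww y \<in> V} = (\<Union>m. \<Union>j. \<Inter>k. E m (j + k))"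
  proof (rule Set.set_eqI, rule iffI)
    fix y assume y: "y \<in> {y \<in> carrier G. ww y \<in> V}"
    then have yc: "y \<in> carrier G" and w: "ww y \<in> V" by simp_all
    obtain m j where "\<forall>k. y \<in> E m (j + k)" using char[OF yc] w by blast
    then show "y \<in> (\<Union>m. \<Union>j. \<Inter>k. E m (j + k))" by blast
  next
    fix y assume y: "y \<in> (\<Union>m. \<Union>j. \<Inter>k. E m (j + k))"
    then obtain m j where mj: "\<forall>k. y \<in> E m (j + k)" by blast
    have "y \<in> E m (j + 0)" using mj by blast
    then have yc: "y \<in> carrier G" unfolding E_def by blast
    have "ww y \<in> V" using char[OF yc] mj by blast
    then show "y \<in> {y \<in> carrier G. ww y \<in> V}" using yc by simp
  qed
  show ?thesis unfolding eq using Em by (intro sets.countable_UN sets.countable_INT) auto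
qed

lemma ww_meas: assumes A: "A \<in> sets MM" shows "{y \<in> carrier G. ww y \<in> A} \<in> sets MM"
proof -
  have "A \<in> sigma_sets (carrier G) {U. openin mtopology U}" using A sets_MM by simp
  then show ?thesis
  proof (induction rule: sigma_sets.induct)
    case (Basic a) then show ?case using ww_open_meas by simp
  next
    case Empty then show ?case by simp
  next
    case (Compl a)
    have "{y \<in> carrier G. ww y \<in> carrier G - a} = space MM - {y \<in> carrier G. ww y \<in> a}"
      using ww_car space_MM by auto
    then show ?case using Compl.IH by (simp add: sets.compl_sets)
  next
    case (Union a)
    have "{y \<in> carrier G. ww y \<in> \<Union>(range a)} = (\<Union>i. {y \<in> carrier G. ww y \<in> a i})" by auto
    then show ?case using Union.IH by (simp add: sets.countable_UN)
  qed
qed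

lemma borel_MM: "borel_sets mtopology = sets MM"
  unfolding borel_sets_def sets_MM topspace_mtopology ..

lemma H_MM: "H \<in> sets MM"
proof -
  have "openin mtopology (carrier G - H)" using cl unfolding closedin_def topspace_mtopology by simp
  then have "carrier G - H \<in> sets MM" by (rule open_MM)
  then have "space MM - (carrier G - H) \<in> sets MM" by (rule sets.compl_sets)
  moreover have "space MM - (carrier G - H) = H" using space_MM H_sub by auto
  ultimately show ?thesis by simp
qed

lemma borel_sub: "borel_sets (subtopology mtopology H) = (\<inter>) H ` sets MM"
proof -
  have top: "topspace (subtopology mtopology H) = H" using H_sub by (simp add: Int_absorb1)
  have op: "{U. openin (subtopology mtopology H) U} = (\<inter>) H ` {U. openin mtopology U}"
    unfolding openin_subtopology by auto
  have "(\<inter>) H ` sigma_sets (carrier G) {U. openin mtopology U} = sigma_sets H ((\<inter>) H ` {U. openin mtopology U})"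
    by (rule sigma_sets_Int) (use H_MM sets_MM H_sub in auto)
  then show ?thesis unfolding borel_sets_def top op sets_MM by simp
qed

lemma tr_sub: "translate2 (G\<lparr>carrier := H\<rparr>) g B h = translate2 G g B h"
  unfolding translate2_def by simp

lemma transl:
  assumes B: "B \<subseteq> H" and g: "g \<in> carrier G" and h: "h \<in> carrier G"
  shows "translate2 G g {y \<in> carrier G. ww y \<in> B} h \<inter> H = translate2 G (inv (ww (inv g \<otimes> inv h))) B \<one>"
proof -
  define c where "c = inv g \<otimes> inv h"
  have c: "c \<in> carrier G" using g h by (simp add: c_def)
  have wc: "ww c \<in> H" by (rule ww_H[OF c])
  have wcc: "ww c \<in> carrier G" using H_car[OF wc] .
  define a where "a = inv (ww c)"
  have a: "a \<in> H" unfolding a_def by (rule H_inv[OF wc])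
  have ac: "a \<in> carrier G" using H_car[OF a] .
  have key1: "inv g \<otimes> x \<otimes> inv h = c \<otimes> x" if x: "x \<in> H" for x
  proof -
    have xc: "x \<in> carrier G" using H_car[OF x] .
    have "inv g \<otimes> x \<otimes> inv h = inv g \<otimes> (x \<otimes> inv h)" using g h xc by (simp add: m_assoc)
    also have "x \<otimes> inv h = inv h \<otimes> x" using H_comm[OF x] h by simp
    also have "inv g \<otimes> (inv h \<otimes> x) = c \<otimes> x" using g h xc by (simp add: c_def m_assoc)
    finally show ?thesis .
  qed
  show ?thesis
  proof (rule Set.set_eqI, rule iffI)
    fix x assume "x \<in> translate2 G g {y \<in> carrier G. ww y \<in> B} h \<inter> H"
    then obtain y where y: "y \<in> carrier G" "ww y \<in> B" "x = g \<otimes> y \<otimes> h" and x: "x \<in> H"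
      unfolding translate2_def by blast
    have xc: "x \<in> carrier G" using H_car[OF x] .
    have "inv g \<otimes> x \<otimes> inv h = inv g \<otimes> (g \<otimes> y \<otimes> h) \<otimes> inv h" using y(3) by simp
    also have "\<dots> = y" using g h y(1) by (simp add: m_assoc[symmetric]) (simp add: m_assoc)
    finally have "y = c \<otimes> x" using key1[OF x] by simp
    then have "ww y = ww c \<otimes> x" using ww_shift[OF c x] by simp
    then have "a \<otimes> ww y \<otimes> \<one> = x" using wcc xc ac by (simp add: a_def m_assoc[symmetric])
    then show "x \<in> translate2 G (inv (ww (inv g \<otimes> inv h))) B \<one>"
      unfolding translate2_def a_def c_def using y(2) by (auto intro!: image_eqI[of _ _ "ww y"])
  next
    fix x assume "x \<in> translate2 G (inv (ww (inv g \<otimes> inv h))) B \<one>"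
    then obtain b where b: "b \<in> B" "x = a \<otimes> b \<otimes> \<one>" unfolding translate2_def a_def c_def by blast
    have bH: "b \<in> H" using b(1) B by blast
    have bc: "b \<in> carrier G" using H_car[OF bH] .
    have xe: "x = a \<otimes> b" using b(2) ac bc by simp
    have x: "x \<in> H" using xe H_mult[OF a bH] by simp
    have xc: "x \<in> carrier G" using H_car[OF x] .
    define y where "y = c \<otimes> x"
    have yc: "y \<in> carrier G" using c xc by (simp add: y_def)
    have "ww y = ww c \<otimes> x" unfolding y_def by (rule ww_shift[OF c x])
    also have "\<dots> = b" using xe wcc bc by (simp add: a_def m_assoc[symmetric])
    finally have wy: "ww y = b" .
    have "g \<otimes> y \<otimes> h = g \<otimes> (inv g \<otimes> x \<otimes> inv h) \<otimes> h" using key1[OF x] by (simp add: y_def)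
    also have "\<dots> = x" using g h xc by (simp add: m_assoc[symmetric]) (simp add: m_assoc)
    finally have "x = g \<otimes> y \<otimes> h" by simp
    then show "x \<in> translate2 G g {y \<in> carrier G. ww y \<in> B} h \<inter> H"
      unfolding translate2_def using yc wy b(1) x by blast
  qed
qed

lemma sub_sets_H: "B \<in> borel_sets (subtopology mtopology H) \<Longrightarrow> B \<subseteq> H"
  unfolding borel_sub by auto

lemma pre_meas: assumes "B \<in> borel_sets (subtopology mtopology H)"
  shows "{y \<in> carrier G. ww y \<in> B} \<in> borel_sets mtopology"
proof -
  obtain A where A: "A \<in> sets MM" "B = H \<inter> A" using assms unfolding borel_sub by blast
  have "{y \<in> carrier G. ww y \<in> B} = {y \<in> carrier G. ww y \<in> A}" using A(2) ww_H by auto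
  then show ?thesis using ww_meas[OF A(1)] borel_MM by simp
qed

lemma transfer:
  assumes HNM: "H = N \<union> M"
    and hn: "haar_null (G\<lparr>carrier := H\<rparr>) (subtopology mtopology H) N"
    and hm: "haar_meager (G\<lparr>carrier := H\<rparr>) (subtopology mtopology H) M"
  shows "\<exists>N M. carrier G = N \<union> M \<and> haar_null G mtopology N \<and> haar_meager G mtopology M"
proof -
  have cH: "carrier (G\<lparr>carrier := H\<rparr>) = H" by simp
  obtain BN \<mu> where BN1: "BN \<in> borel_sets (subtopology mtopology H)" and BN2: "N \<subseteq> BN"
    and s\<mu>: "sets \<mu> = borel_sets (subtopology mtopology H)" and p\<mu>: "prob_space \<mu>"
    and z0: "\<forall>g\<in>carrier (G\<lparr>carrier := H\<rparr>). \<forall>h\<in>carrier (G\<lparr>carrier := H\<rparr>). emeasure \<mu> (translate2 (G\<lparr>carrier := H\<rparr>) g BN h) = 0"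
    using hn unfolding haar_null_def by blast
  note BN = BN1 BN2
  have z\<mu>: "emeasure \<mu> (translate2 G g BN h) = 0" if "g \<in> H" "h \<in> H" for g h
    using z0 that unfolding cH tr_sub by blast
  obtain BM and K :: "real set" and dK f where BM1: "BM \<in> borel_sets (subtopology mtopology H)" and BM2: "M \<subseteq> BM"
    and K1: "Metric_space K dK" and K2: "K \<noteq> {}" and K3: "compact_space (Metric_space.mtopology K dK)"
    and fc: "continuous_map (Metric_space.mtopology K dK) (subtopology mtopology H) f"
    and fm0: "\<forall>g\<in>carrier (G\<lparr>carrier := H\<rparr>). \<forall>h\<in>carrier (G\<lparr>carrier := H\<rparr>).
          meager_in (Metric_space.mtopology K dK) {x \<in> K. f x \<in> translate2 (G\<lparr>carrier := H\<rparr>) g BM h}"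
    using hm unfolding haar_meager_def by blast
  note BM = BM1 BM2
  note K = K1 K2 K3
  have fm: "meager_in (Metric_space.mtopology K dK) {x \<in> K. f x \<in> translate2 G g BM h}"
    if "g \<in> H" "h \<in> H" for g h
    using fm0 that unfolding cH tr_sub by blast
  define N' where "N' = {y \<in> carrier G. ww y \<in> N}"
  define M' where "M' = {y \<in> carrier G. ww y \<in> M}"
  define BN' where "BN' = {y \<in> carrier G. ww y \<in> BN}"
  define BM' where "BM' = {y \<in> carrier G. ww y \<in> BM}"
  have cov: "carrier G = N' \<union> M'" using ww_H HNM by (auto simp: N'_def M'_def)
  have BNH: "BN \<subseteq> H" by (rule sub_sets_H[OF BN(1)])
  have BMH: "BM \<subseteq> H" by (rule sub_sets_H[OF BM(1)])
  have sp\<mu>: "space \<mu> = H"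
  proof
    have "space \<mu> \<in> sets \<mu>" by simp
    then show "space \<mu> \<subseteq> H" using s\<mu> sub_sets_H by blast
    have "H \<in> sets \<mu>" unfolding s\<mu> borel_sub using H_MM by (intro image_eqI[of _ _ H]) auto
    then show "H \<subseteq> space \<mu>" by (rule sets.sets_into_space)
  qed
  have idm: "(\<lambda>x. x) \<in> \<mu> \<rightarrow>\<^sub>M MM"
  proof (rule measurableI)
    fix x assume "x \<in> space \<mu>" then show "x \<in> space MM" using sp\<mu> space_MM H_sub by auto
  next
    fix A assume "A \<in> sets MM"
    then have "H \<inter> A \<in> sets \<mu>" unfolding s\<mu> borel_sub by blast
    moreover have "(\<lambda>x. x) -` A \<inter> space \<mu> = H \<inter> A" using sp\<mu> by auto
    ultimately show "(\<lambda>x. x) -` A \<inter> space \<mu> \<in> sets \<mu>" by simp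
  qed
  define \<mu>' where "\<mu>' = distr \<mu> MM (\<lambda>x. x)"
  have hn': "haar_null G mtopology N'"
    unfolding haar_null_def
  proof (intro exI conjI ballI)
    show "BN' \<in> borel_sets mtopology" unfolding BN'_def by (rule pre_meas[OF BN(1)])
    show "N' \<subseteq> BN'" using BN(2) by (auto simp: N'_def BN'_def)
    show "sets \<mu>' = borel_sets mtopology" by (simp add: \<mu>'_def borel_MM)
    show "prob_space \<mu>'" unfolding \<mu>'_def by (rule prob_space.prob_space_distr[OF p\<mu> idm])
    fix g h assume g: "g \<in> carrier G" and h: "h \<in> carrier G"
    let ?X = "translate2 G g BN' h"
    show "emeasure \<mu>' ?X = 0"
    proof (cases "?X \<in> sets MM")
      case False then show ?thesis by (simp add: \<mu>'_def emeasure_notin_sets)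
    next
      case True
      have "emeasure \<mu>' ?X = emeasure \<mu> ((\<lambda>x. x) -` ?X \<inter> space \<mu>)"
        unfolding \<mu>'_def by (rule emeasure_distr[OF idm True])
      also have "(\<lambda>x. x) -` ?X \<inter> space \<mu> = ?X \<inter> H" using sp\<mu> by auto
      also have "\<dots> = translate2 G (inv (ww (inv g \<otimes> inv h))) BN \<one>"
        unfolding BN'_def by (rule transl[OF BNH g h])
      also have "emeasure \<mu> \<dots> = 0"
      proof (rule z\<mu>)
        show "inv (ww (inv g \<otimes> inv h)) \<in> H" using g h by (intro H_inv ww_H) simp
        show "\<one> \<in> H" by (rule H_one)
      qed
      finally show ?thesis .
    qed
  qed
  have hm': "haar_meager G mtopology M'"
    unfolding haar_meager_def
  proof (intro exI conjI ballI)
    show "BM' \<in> borel_sets mtopology" unfolding BM'_def by (rule pre_meas[OF BM(1)])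
    show "M' \<subseteq> BM'" using BM(2) by (auto simp: M'_def BM'_def)
    show "Metric_space K dK" "K \<noteq> {}" "compact_space (Metric_space.mtopology K dK)" by (fact K)+
    show "continuous_map (Metric_space.mtopology K dK) mtopology f"
      using fc by (rule continuous_map_into_fulltopology)
    fix g h assume g: "g \<in> carrier G" and h: "h \<in> carrier G"
    have fH: "f x \<in> H" if "x \<in> K" for x
      using continuous_map_image_subset_topspace[OF fc] that H_sub Metric_space.topspace_mtopology[OF K(1)]
      by auto
    have "{x \<in> K. f x \<in> translate2 G g BM' h} = {x \<in> K. f x \<in> translate2 G g BM' h \<inter> H}"
      using fH by auto
    also have "\<dots> = {x \<in> K. f x \<in> translate2 G (inv (ww (inv g \<otimes> inv h))) BM \<one>}"
      unfolding BM'_def transl[OF BMH g h] ..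
    finally show "meager_in (Metric_space.mtopology K dK) {x \<in> K. f x \<in> translate2 G g BM' h}"
      using fm[of "inv (ww (inv g \<otimes> inv h))" \<one>] g h H_one by (simp add: H_inv ww_H)
  qed
  show ?thesis using cov hn' hm' by blast
qed

end

theorem theorem5p1:
  shows
   "(\<forall>(G::('a, 'b) monoid_scheme) (T::'a topology) H.
       polish_group G T \<and> subgroup H G \<and> closedin T H \<and> uncountable H
       \<and> H \<subseteq> group_center G
       \<and> (\<exists>N M. H = N \<union> M \<and> haar_null (G\<lparr>carrier := H\<rparr>) (subtopology T H) N
                 \<and> haar_meager (G\<lparr>carrier := H\<rparr>) (subtopology T H) M)
       \<longrightarrow> (\<exists>N M. carrier G = N \<union> M \<and> haar_null G T N \<and> haar_meager G T M))
    \<and> (\<exists>N M. carrier (add_group :: (nat \<Rightarrow> real) monoid) = N \<union> M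
          \<and> haar_null (add_group :: (nat \<Rightarrow> real) monoid) euclidean N
          \<and> haar_meager (add_group :: (nat \<Rightarrow> real) monoid) euclidean M)
    \<and> ((UNIV :: 'x::banach set) \<noteq> {0} \<longrightarrow>
        (\<exists>N M. carrier (add_group :: 'x monoid) = N \<union> M
          \<and> haar_null (add_group :: 'x monoid) euclidean N
          \<and> haar_meager (add_group :: 'x monoid) euclidean M))"
proof (intro conjI)
  show "\<forall>(G::('a, 'b) monoid_scheme) (T::'a topology) H.
       polish_group G T \<and> subgroup H G \<and> closedin T H \<and> uncountable H
       \<and> H \<subseteq> group_center G
       \<and> (\<exists>N M. H = N \<union> M \<and> haar_null (G\<lparr>carrier := H\<rparr>) (subtopology T H) N
                 \<and> haar_meager (G\<lparr>carrier := H\<rparr>) (subtopology T H) M)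
       \<longrightarrow> (\<exists>N M. carrier G = N \<union> M \<and> haar_null G T N \<and> haar_meager G T M)"
  proof (intro allI impI)
    fix G :: "('a, 'b) monoid_scheme" and T :: "'a topology" and H
    assume a: "polish_group G T \<and> subgroup H G \<and> closedin T H \<and> uncountable H
       \<and> H \<subseteq> group_center G
       \<and> (\<exists>N M. H = N \<union> M \<and> haar_null (G\<lparr>carrier := H\<rparr>) (subtopology T H) N
                 \<and> haar_meager (G\<lparr>carrier := H\<rparr>) (subtopology T H) M)"
    then have pg: "polish_group G T" and sub: "subgroup H G" and cl: "closedin T H"
      and cen: "H \<subseteq> group_center G" by auto
    from a obtain N M where NM: "H = N \<union> M" "haar_null (G\<lparr>carrier := H\<rparr>) (subtopology T H) N"
        "haar_meager (G\<lparr>carrier := H\<rparr>) (subtopology T H) M" by blast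
    have grp: "group G" and top: "topspace T = carrier G" and cms: "completely_metrizable_space T"
      and sep: "separable_space T"
      and mc: "continuous_map (prod_topology T T) T (\<lambda>(x, y). x \<otimes>\<^bsub>G\<^esub> y)"
      and ic: "continuous_map T T (\<lambda>x. inv\<^bsub>G\<^esub> x)"
      using pg unfolding polish_group_def by auto
    obtain M0 d where ms: "Metric_space M0 d" and mcp: "Metric_space.mcomplete M0 d"
      and Teq0: "T = Metric_space.mtopology M0 d"
      using cms unfolding completely_metrizable_space_def by blast
    have "M0 = carrier G" using top Teq0 Metric_space.topspace_mtopology[OF ms] by simp
    then have ms': "Metric_space (carrier G) d" and mcp': "Metric_space.mcomplete (carrier G) d"
      and Teq: "T = Metric_space.mtopology (carrier G) d" using ms mcp Teq0 by simp_all
    have ctx: "pg_ctx G d H"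
      unfolding pg_ctx_def pg_ctx_axioms_def
      using grp ms' mcp' sep mc ic sub cl cen unfolding Teq by blast
    show "\<exists>N M. carrier G = N \<union> M \<and> haar_null G T N \<and> haar_meager G T M"
      using pg_ctx.transfer[OF ctx NM[unfolded Teq]] unfolding Teq .
  qed
next
  define \<phi> where "\<phi> = (\<lambda>t::real. (\<lambda>n::nat. if n = 0 then t else 0))"
  define p where "p = (\<lambda>x::nat \<Rightarrow> real. x 0)"
  have \<phi>c: "continuous_on UNIV \<phi>"
  proof (rule continuous_on_coordinatewise_then_product)
    fix i :: nat
    show "continuous_on UNIV (\<lambda>x. \<phi> x i)"
      unfolding \<phi>_def by (cases "i = 0") (simp_all add: continuous_on_id continuous_on_const)
  qed
  have pm: "p \<in> borel_measurable borel"
    unfolding p_def by (rule borel_measurable_continuous_onI[OF continuous_on_product_coordinates])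
  have ps: "p (x + \<phi> t) = p x + t" for x t by (simp add: p_def \<phi>_def)
  show "\<exists>N M. carrier (add_group :: (nat \<Rightarrow> real) monoid) = N \<union> M
          \<and> haar_null (add_group :: (nat \<Rightarrow> real) monoid) euclidean N
          \<and> haar_meager (add_group :: (nat \<Rightarrow> real) monoid) euclidean M"
    by (rule abelian_decomp[OF \<phi>c pm]) (simp add: p_def \<phi>_def)
next
  show "(UNIV :: 'x::banach set) \<noteq> {0} \<longrightarrow>
        (\<exists>N M. carrier (add_group :: 'x monoid) = N \<union> M
          \<and> haar_null (add_group :: 'x monoid) euclidean N
          \<and> haar_meager (add_group :: 'x monoid) euclidean M)"
  proof
    assume "(UNIV :: 'x::banach set) \<noteq> {0}"
    then obtain e :: 'x where e: "e \<noteq> 0" by auto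
    obtain p :: "'x \<Rightarrow> real" where pm: "p \<in> borel_measurable borel" and ps: "\<forall>x t. p (x + t *\<^sub>R e) = p x + t"
      using banach_p[OF e] by blast
    have \<phi>c: "continuous_on UNIV (\<lambda>t::real. t *\<^sub>R e)" by (intro continuous_intros)
    show "\<exists>N M. carrier (add_group :: 'x monoid) = N \<union> M
          \<and> haar_null (add_group :: 'x monoid) euclidean N
          \<and> haar_meager (add_group :: 'x monoid) euclidean M"
      by (rule abelian_decomp[OF \<phi>c pm]) (use ps in blast)
  qed
qed

end
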